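(* Let $(X,\mathcal{B},\mu,G)$ be a measure-preserving system and $S\subset G$. Then (1) the collection of $S$-almost periodic functions is a closed linear subspace of $L^2(\mu)$; (2) the collection of measurable sets $A\in\mathcal{B}$ with $h^*_{\mu,S}(\{A,A^c\})=0$ is a sub-$\sigma$-algebra of $\mathcal{B}$; moreover, if $S=G$, this sub-$\sigma$-algebra is $G$-invariant.
   Context: $(X,\mathcal{B},\mu)$ is a standard probability space and the discrete group $G$ acts measurably and preserves $\mu$. $f\in L^2(\mu)$ is $S$-almost periodic if $\{f\circ g\colon g\in S\}$ is precompact in $L^2(\mu)$. For a finite partition $\alpha$ (identified mod $0$), $g^{-1}\alpha=\{g^{-1}A\colon A\in\alpha\}$, $H_\mu(\alpha)=-\sum_{A\in\alpha}\mu(A)\log\mu(A)$, and $h^*_{\mu,S}(\alpha)=\limsup_n\frac1n\sup_{\alpha_1,\dots,\alpha_n\in\{g^{-1}\alpha\colon g\in S\}}H_\mu(\bigvee_{i=1}^n\alpha_i)$. $G$-invariant means $g^{-1}A$ belongs to the collection whenever $A$ does. *)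

theory Defs
  imports "HOL-Probability.Probability" "HOL-Algebra.Group"
begin

definition mps :: "'a measure \<Rightarrow> ('g, 'b) monoid_scheme \<Rightarrow> ('g \<Rightarrow> 'a \<Rightarrow> 'a) \<Rightarrow> bool" where
  "mps M G T \<longleftrightarrow> prob_space M \<and> group G \<and>
     (\<forall>g\<in>carrier G. T g \<in> M \<rightarrow>\<^sub>M M \<and> distr M M (T g) = M) \<and>
     (\<forall>x\<in>space M. T \<one>\<^bsub>G\<^esub> x = x) \<and>
     (\<forall>g\<in>carrier G. \<forall>h\<in>carrier G. \<forall>x\<in>space M. T (g \<otimes>\<^bsub>G\<^esub> h) x = T g (T h x))"

definition L2 :: "'a measure \<Rightarrow> ('a \<Rightarrow> complex) set" where
  "L2 M = {f. f \<in> borel_measurable M \<and> integrable M (\<lambda>x. (cmod (f x))\<^sup>2)}"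

definition L2_norm :: "'a measure \<Rightarrow> ('a \<Rightarrow> complex) \<Rightarrow> real" where
  "L2_norm M f = sqrt (\<integral>x. (cmod (f x))\<^sup>2 \<partial>M)"

text \<open>Precompactness in L^2 (a metric space after identifying a.e.-equal functions):
  every sequence in the set has a subsequence converging in L^2 to an element of L^2.\<close>
definition L2_precompact :: "'a measure \<Rightarrow> ('a \<Rightarrow> complex) set \<Rightarrow> bool" where
  "L2_precompact M F \<longleftrightarrow>
     (\<forall>u :: nat \<Rightarrow> ('a \<Rightarrow> complex). (\<forall>n. u n \<in> F) \<longrightarrow>
        (\<exists>r h. strict_mono r \<and> h \<in> L2 M \<and>
               (\<lambda>n. L2_norm M (\<lambda>x. u (r n) x - h x)) \<longlonglongrightarrow> 0))"

definition almost_periodic ::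
    "'a measure \<Rightarrow> ('g \<Rightarrow> 'a \<Rightarrow> 'a) \<Rightarrow> 'g set \<Rightarrow> ('a \<Rightarrow> complex) \<Rightarrow> bool" where
  "almost_periodic M T S f \<longleftrightarrow> f \<in> L2 M \<and> L2_precompact M ((\<lambda>g. f \<circ> T g) ` S)"

definition pull_part :: "'a measure \<Rightarrow> ('g \<Rightarrow> 'a \<Rightarrow> 'a) \<Rightarrow> 'g \<Rightarrow> 'a set set \<Rightarrow> 'a set set" where
  "pull_part M T g P = (\<lambda>A. T g -` A \<inter> space M) ` P"

definition join_part :: "'a set set \<Rightarrow> 'a set set \<Rightarrow> 'a set set" where
  "join_part P Q = {A \<inter> B | A B. A \<in> P \<and> B \<in> Q}"

fun join_list :: "'a measure \<Rightarrow> 'a set set list \<Rightarrow> 'a set set" where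
  "join_list M [] = {space M}"
| "join_list M (P # Ps) = join_part P (join_list M Ps)"

text \<open>Shannon entropy (natural logarithm; the convention 0 log 0 = 0 is automatic
  since the summand is t * ln t with t = 0).\<close>
definition part_entropy :: "'a measure \<Rightarrow> 'a set set \<Rightarrow> real" where
  "part_entropy M P = - (\<Sum>A\<in>P. measure M A * ln (measure M A))"

text \<open>The supremum is taken in the extended reals; 0 is inserted, which changes nothing
  (entropies are nonnegative) except fixing the value 0 when S is empty.\<close>
definition upper_entropy ::
    "'a measure \<Rightarrow> ('g \<Rightarrow> 'a \<Rightarrow> 'a) \<Rightarrow> 'g set \<Rightarrow> 'a set set \<Rightarrow> ereal" where
  "upper_entropy M T S P =
     limsup (\<lambda>n::nat. ereal (1 / real n) *
        Sup (insert 0 ((\<lambda>gs. ereal (part_entropy M (join_list M (map (\<lambda>g. pull_part M T g P) gs))))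
                       ` {gs. set gs \<subseteq> S \<and> length gs = n})))"

end

theory Submission
  imports Defs "HOL-Library.Diagonal_Subsequence" "HOL-Real_Asymp.Real_Asymp"
begin


lemma L2_norm_nonneg: "0 \<le> L2_norm M f"
  by (simp add: L2_norm_def)

lemma L2I: "f \<in> borel_measurable M \<Longrightarrow> integrable M (\<lambda>x. (cmod (f x))\<^sup>2) \<Longrightarrow> f \<in> L2 M"
  by (simp add: L2_def)

lemma L2D: "f \<in> L2 M \<Longrightarrow> f \<in> borel_measurable M" "f \<in> L2 M \<Longrightarrow> integrable M (\<lambda>x. (cmod (f x))\<^sup>2)"
  by (auto simp: L2_def)

lemma L2_norm_sq: "L2_norm M f ^ 2 = (\<integral>x. (cmod (f x))\<^sup>2 \<partial>M)"
  unfolding L2_norm_def by (simp add: integral_nonneg_AE)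

lemma sq_ineq:
  fixes a b :: complex and t :: real assumes t: "t > 0"
  shows "(cmod (a + b))\<^sup>2 \<le> (1 + t) * (cmod a)\<^sup>2 + (1 + 1/t) * (cmod b)\<^sup>2"
proof -
  have "cmod (a + b) \<le> cmod a + cmod b" by (rule norm_triangle_ineq)
  hence "(cmod (a + b))\<^sup>2 \<le> (cmod a + cmod b)\<^sup>2" by (simp add: power_mono)
  also have "\<dots> \<le> (1 + t) * (cmod a)\<^sup>2 + (1 + 1/t) * (cmod b)\<^sup>2"
  proof -
    have "0 \<le> (t * cmod a - cmod b)\<^sup>2 / t" using t by simp
    also have "(t * cmod a - cmod b)\<^sup>2 / t = t * (cmod a)\<^sup>2 - 2 * cmod a * cmod b + (cmod b)\<^sup>2 / t"
      using t by (simp add: power2_eq_square field_simps)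
    finally have 1: "0 \<le> t * (cmod a)\<^sup>2 - 2 * cmod a * cmod b + (cmod b)\<^sup>2 / t" .
    have 2: "(cmod a + cmod b)\<^sup>2 = (cmod a)\<^sup>2 + 2 * cmod a * cmod b + (cmod b)\<^sup>2" by (simp add: power2_sum)
    have 3: "(1 + t) * (cmod a)\<^sup>2 + (1 + 1/t) * (cmod b)\<^sup>2 = (cmod a)\<^sup>2 + t * (cmod a)\<^sup>2 + (cmod b)\<^sup>2 + (cmod b)\<^sup>2 / t"
      by (simp add: distrib_right)
    show ?thesis unfolding 2 3 using 1 by linarith
  qed
  finally show ?thesis .
qed

lemma L2_add: assumes "f \<in> L2 M" "h \<in> L2 M" shows "(\<lambda>x. f x + h x) \<in> L2 M"
proof (rule L2I)
  show m: "(\<lambda>x. f x + h x) \<in> borel_measurable M" by (intro borel_measurable_add L2D assms)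
  show "integrable M (\<lambda>x. (cmod (f x + h x))\<^sup>2)"
  proof (rule Bochner_Integration.integrable_bound)
    show "integrable M (\<lambda>x. (1 + 1) * (cmod (f x))\<^sup>2 + (1 + 1/1) * (cmod (h x))\<^sup>2)"
      using L2D(2)[OF assms(1)] L2D(2)[OF assms(2)] by (intro Bochner_Integration.integrable_add Bochner_Integration.integrable_mult_right)
    show "(\<lambda>x. (cmod (f x + h x))\<^sup>2) \<in> borel_measurable M" using m by measurable
    show "AE x in M. norm ((cmod (f x + h x))\<^sup>2) \<le> norm ((1 + 1) * (cmod (f x))\<^sup>2 + (1 + 1/1) * (cmod (h x))\<^sup>2)"
    proof (rule AE_I2)
      fix x
      have "(cmod (f x + h x))\<^sup>2 \<le> (1 + 1) * (cmod (f x))\<^sup>2 + (1 + 1/1) * (cmod (h x))\<^sup>2"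
        by (rule sq_ineq) simp
      thus "norm ((cmod (f x + h x))\<^sup>2) \<le> norm ((1 + 1) * (cmod (f x))\<^sup>2 + (1 + 1/1) * (cmod (h x))\<^sup>2)"
        by simp
    qed
  qed
qed

lemma L2_scale: assumes "f \<in> L2 M" shows "(\<lambda>x. c * f x) \<in> L2 M"
  and "L2_norm M (\<lambda>x. c * f x) = cmod c * L2_norm M f"
proof -
  have eq: "(\<lambda>x. (cmod (c * f x))\<^sup>2) = (\<lambda>x. (cmod c)\<^sup>2 * (cmod (f x))\<^sup>2)"
    by (simp add: norm_mult power_mult_distrib)
  show "(\<lambda>x. c * f x) \<in> L2 M"
  proof (rule L2I)
    show "(\<lambda>x. c * f x) \<in> borel_measurable M" by (intro borel_measurable_times borel_measurable_const L2D assms)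
    show "integrable M (\<lambda>x. (cmod (c * f x))\<^sup>2)" unfolding eq by (intro integrable_mult_right L2D assms)
  qed
  show "L2_norm M (\<lambda>x. c * f x) = cmod c * L2_norm M f"
    unfolding L2_norm_def eq by (simp add: real_sqrt_mult)
qed

lemma L2_diff: assumes "f \<in> L2 M" "h \<in> L2 M" shows "(\<lambda>x. f x - h x) \<in> L2 M"
proof -
  have "(\<lambda>x. f x + (-1) * h x) \<in> L2 M" using assms by (intro L2_add L2_scale)
  thus ?thesis by simp
qed

lemma L2_norm_commute: "L2_norm M (\<lambda>x. f x - h x) = L2_norm M (\<lambda>x. h x - f x)"
  unfolding L2_norm_def by (simp add: norm_minus_commute)

lemma L2_triangle: assumes f: "f \<in> L2 M" and h: "h \<in> L2 M"
  shows "L2_norm M (\<lambda>x. f x + h x) \<le> L2_norm M f + L2_norm M h"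
proof (rule field_le_epsilon)
  fix e :: real assume e: "0 < e"
  define a where "a = L2_norm M f + e/2"
  define b where "b = L2_norm M h + e/2"
  have a: "a > 0" using e L2_norm_nonneg[of M f] unfolding a_def by linarith
  have b: "b > 0" using e L2_norm_nonneg[of M h] unfolding b_def by linarith
  define t where "t = b / a"
  have t: "t > 0" using a b by (simp add: t_def)
  have "L2_norm M (\<lambda>x. f x + h x) ^ 2 = (\<integral>x. (cmod (f x + h x))\<^sup>2 \<partial>M)" by (rule L2_norm_sq)
  also have "\<dots> \<le> (\<integral>x. (1 + t) * (cmod (f x))\<^sup>2 + (1 + 1/t) * (cmod (h x))\<^sup>2 \<partial>M)"
  proof (rule integral_mono)
    show "integrable M (\<lambda>x. (cmod (f x + h x))\<^sup>2)" using L2D(2)[OF L2_add[OF f h]] .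
    show "integrable M (\<lambda>x. (1 + t) * (cmod (f x))\<^sup>2 + (1 + 1/t) * (cmod (h x))\<^sup>2)"
      using L2D(2)[OF f] L2D(2)[OF h] by (intro Bochner_Integration.integrable_add Bochner_Integration.integrable_mult_right)
    show "(cmod (f x + h x))\<^sup>2 \<le> (1 + t) * (cmod (f x))\<^sup>2 + (1 + 1/t) * (cmod (h x))\<^sup>2" for x
      by (rule sq_ineq[OF t])
  qed
  also have "\<dots> = (1 + t) * L2_norm M f ^ 2 + (1 + 1/t) * L2_norm M h ^ 2"
  proof -
    have "(\<integral>x. (1 + t) * (cmod (f x))\<^sup>2 + (1 + 1/t) * (cmod (h x))\<^sup>2 \<partial>M) =
      (\<integral>x. (1 + t) * (cmod (f x))\<^sup>2 \<partial>M) + (\<integral>x. (1 + 1/t) * (cmod (h x))\<^sup>2 \<partial>M)"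
      using L2D(2)[OF f] L2D(2)[OF h]
      by (intro Bochner_Integration.integral_add Bochner_Integration.integrable_mult_right)
    also have "\<dots> = (1 + t) * (\<integral>x. (cmod (f x))\<^sup>2 \<partial>M) + (1 + 1/t) * (\<integral>x. (cmod (h x))\<^sup>2 \<partial>M)"
      by (simp only: integral_mult_right_zero)
    finally show ?thesis by (simp only: L2_norm_sq)
  qed
  also have "\<dots> \<le> (1 + t) * a ^ 2 + (1 + 1/t) * b ^ 2"
  proof -
    have "L2_norm M f ^ 2 \<le> a ^ 2" using e L2_norm_nonneg[of M f] unfolding a_def by (intro power_mono) auto
    moreover have "L2_norm M h ^ 2 \<le> b ^ 2" using e L2_norm_nonneg[of M h] unfolding b_def by (intro power_mono) auto
    ultimately show ?thesis using t by (intro add_mono mult_left_mono) auto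
  qed
  also have "\<dots> = (a + b) ^ 2"
  proof -
    have "(1 + t) * a ^ 2 = a ^ 2 + a * b" using a unfolding t_def by (simp add: power2_eq_square distrib_right)
    moreover have "(1 + 1/t) * b ^ 2 = b ^ 2 + a * b" using a b unfolding t_def by (simp add: power2_eq_square distrib_right)
    ultimately show ?thesis by (simp add: power2_sum)
  qed
  finally have sq: "L2_norm M (\<lambda>x. f x + h x) ^ 2 \<le> (a + b) ^ 2" .
  have "L2_norm M (\<lambda>x. f x + h x) \<le> a + b"
    by (rule power2_le_imp_le[OF sq]) (use a b in linarith)
  thus "L2_norm M (\<lambda>x. f x + h x) \<le> L2_norm M f + L2_norm M h + e" by (simp add: a_def b_def)
qed

lemma L2_triangle3: assumes "f \<in> L2 M" "g \<in> L2 M" "h \<in> L2 M"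
  shows "L2_norm M (\<lambda>x. f x - h x) \<le> L2_norm M (\<lambda>x. f x - g x) + L2_norm M (\<lambda>x. g x - h x)"
proof -
  have "L2_norm M (\<lambda>x. (f x - g x) + (g x - h x)) \<le> L2_norm M (\<lambda>x. f x - g x) + L2_norm M (\<lambda>x. g x - h x)"
    using assms by (intro L2_triangle L2_diff)
  thus ?thesis by simp
qed




lemma ennreal_term_le_suminf: "(f :: nat \<Rightarrow> ennreal) k \<le> suminf f"
  using sum_le_suminf[of f "{k}"] by (simp add: summableI)

lemma L2_nn: "f \<in> L2 M \<Longrightarrow> (\<integral>\<^sup>+x. ennreal ((cmod (f x))\<^sup>2) \<partial>M) = ennreal (L2_norm M f ^ 2)"
  by (subst nn_integral_eq_integral) (auto dest: L2D simp: L2_norm_sq)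

lemma quarter: "((1/4::real)^k)^2 = (1/16)^k"
proof -
  have "((1/4::real)^k)^2 = ((1/4)^2)^k" by (metis power_mult mult.commute)
  thus ?thesis by (simp add: power2_eq_square)
qed

lemma L2_complete:
  assumes w: "\<And>i. w i \<in> L2 M"
  and C: "\<And>e. e > 0 \<Longrightarrow> \<exists>N. \<forall>i\<ge>N. \<forall>j\<ge>N. L2_norm M (\<lambda>x. w i x - w j x) < e"
  shows "\<exists>h \<in> L2 M. (\<lambda>n. L2_norm M (\<lambda>x. w n x - h x)) \<longlonglongrightarrow> 0"
proof -
  define N where "N k = (SOME N. \<forall>i\<ge>N. \<forall>j\<ge>N. L2_norm M (\<lambda>x. w i x - w j x) < (1/4::real)^k)" for k
  have N: "L2_norm M (\<lambda>x. w i x - w j x) < (1/4)^k" if "i \<ge> N k" "j \<ge> N k" for k i j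
  proof -
    have "\<exists>N. \<forall>i\<ge>N. \<forall>j\<ge>N. L2_norm M (\<lambda>x. w i x - w j x) < (1/4::real)^k" by (rule C) simp
    from someI_ex[OF this] that show ?thesis unfolding N_def by blast
  qed
  define r where "r = rec_nat (N 0) (\<lambda>k rk. max (Suc rk) (N (Suc k)))"
  have r0: "r 0 = N 0" and rS: "r (Suc k) = max (Suc (r k)) (N (Suc k))" for k
    by (simp_all add: r_def)
  have rmono: "strict_mono r" by (rule strict_monoI_Suc) (simp add: rS)
  have rN: "N k \<le> r k" for k by (cases k) (auto simp: r0 rS)
  have rN': "N k \<le> r m" if "k \<le> m" for k m
    using rN[of k] strict_mono_less_eq[OF rmono, of k m] that by simp
  define v where "v k = w (r k)" for k
  have v: "v k \<in> L2 M" for k by (simp add: v_def w)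
  have vm[measurable]: "v k \<in> borel_measurable M" for k using v by (rule L2D)
  have vclose: "L2_norm M (\<lambda>x. v k x - v m x) < (1/4)^k" if "k \<le> m" for k m
    unfolding v_def by (rule N) (auto intro: rN rN' that)
  define d where "d k x = v (Suc k) x - v k x" for k x
  have dL2: "d k \<in> L2 M" for k unfolding d_def[abs_def] by (intro L2_diff v)
  have dm[measurable]: "d k \<in> borel_measurable M" for k using dL2 by (rule L2D)
  have dn: "L2_norm M (d k) < (1/4)^k" for k
    using vclose[of k "Suc k"] unfolding d_def[abs_def] L2_norm_commute[of M "v k"] by simp
  have dint: "(\<integral>\<^sup>+x. ennreal ((cmod (d k x))\<^sup>2) \<partial>M) \<le> ennreal ((1/16)^k)" for k
  proof -
    have "L2_norm M (d k) ^ 2 \<le> ((1/4)^k)^2"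
      using dn[of k] L2_norm_nonneg[of M "d k"] by (intro power_mono) auto
    also have "((1/4::real)^k)^2 = (1/16)^k" by (rule quarter)
    finally show ?thesis by (simp add: L2_nn[OF dL2])
  qed
  define S where "S x = (\<Sum>k. ennreal (2^k * (cmod (d k x))\<^sup>2))" for x
  have Sm: "S \<in> borel_measurable M" unfolding S_def by measurable
  have "(\<integral>\<^sup>+x. S x \<partial>M) = (\<Sum>k. \<integral>\<^sup>+x. ennreal (2^k * (cmod (d k x))\<^sup>2) \<partial>M)"
    unfolding S_def by (rule nn_integral_suminf) measurable
  also have "\<dots> \<le> (\<Sum>k. ennreal ((1/8)^k))"
  proof (rule suminf_le)
    fix k
    have "(\<integral>\<^sup>+x. ennreal (2^k * (cmod (d k x))\<^sup>2) \<partial>M) = ennreal (2^k) * (\<integral>\<^sup>+x. ennreal ((cmod (d k x))\<^sup>2) \<partial>M)"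
      by (subst nn_integral_cmult[symmetric]) (auto simp: ennreal_mult)
    also have "\<dots> \<le> ennreal (2^k) * ennreal ((1/16)^k)" by (intro mult_left_mono dint) auto
    also have "\<dots> = ennreal ((1/8)^k)"
      by (simp add: ennreal_mult[symmetric] power_mult_distrib[symmetric])
    finally show "(\<integral>\<^sup>+x. ennreal (2^k * (cmod (d k x))\<^sup>2) \<partial>M) \<le> ennreal ((1/8)^k)" .
  qed (auto intro: summableI)
  also have "\<dots> = ennreal (\<Sum>k. (1/8)^k)"
    by (rule suminf_ennreal2) auto
  finally have "(\<integral>\<^sup>+x. S x \<partial>M) \<noteq> \<infinity>" by (auto simp: top_unique)
  hence AE_S: "AE x in M. S x \<noteq> \<infinity>" by (rule nn_integral_PInf_AE[OF Sm])
  have conv: "convergent (\<lambda>k. v k x)" if Sx: "S x \<noteq> \<infinity>" for x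
  proof -
    define c where "c = enn2real (S x)"
    have dle: "cmod (d k x) \<le> sqrt c * (inverse (sqrt 2))^k" for k
    proof -
      have "ennreal (2^k * (cmod (d k x))\<^sup>2) \<le> S x" unfolding S_def by (rule ennreal_term_le_suminf)
      hence "2^k * (cmod (d k x))\<^sup>2 \<le> c" unfolding c_def using Sx
        by (cases "S x") (auto simp: top_unique)
      hence "(cmod (d k x))\<^sup>2 \<le> c / 2^k" by (simp add: field_simps)
      hence "cmod (d k x) \<le> sqrt (c / 2^k)" by (simp add: real_le_rsqrt)
      also have "sqrt (c / 2^k) = sqrt c * (inverse (sqrt 2))^k"
        by (simp add: divide_inverse real_sqrt_mult real_sqrt_inverse real_sqrt_power power_inverse)
      finally show ?thesis .
    qed
    have "summable (\<lambda>k. sqrt c * (inverse (sqrt 2))^k)"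
    proof (intro summable_mult summable_geometric)
      have "1 < sqrt (2::real)" by simp
      thus "norm (inverse (sqrt (2::real))) < 1" by (simp add: inverse_less_1_iff)
    qed
    hence sd: "summable (\<lambda>k. d k x)"
      by (rule summable_comparison_test[rotated]) (use dle in auto)
    have eq: "v n x = v 0 x + (\<Sum>k<n. d k x)" for n
      unfolding d_def by (subst sum_lessThan_telescope) simp
    have "(\<lambda>n. v 0 x + (\<Sum>k<n. d k x)) \<longlonglongrightarrow> v 0 x + suminf (\<lambda>k. d k x)"
      by (intro tendsto_add tendsto_const summable_LIMSEQ sd)
    thus ?thesis unfolding eq[symmetric] by (auto simp: convergent_def)
  qed
  define h where "h x = lim (\<lambda>k. v k x)" for x
  have hm[measurable]: "h \<in> borel_measurable M" unfolding h_def by measurable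
  have hconv: "AE x in M. (\<lambda>k. v k x) \<longlonglongrightarrow> h x"
    using AE_S by eventually_elim (unfold h_def, rule convergent_LIMSEQ_iff[THEN iffD1, OF conv], simp add: top_unique)
  have vh: "(\<integral>\<^sup>+x. ennreal ((cmod (v k x - h x))\<^sup>2) \<partial>M) \<le> ennreal ((1/16)^k)" for k
  proof -
    have "(\<integral>\<^sup>+x. ennreal ((cmod (v k x - h x))\<^sup>2) \<partial>M) =
          (\<integral>\<^sup>+x. liminf (\<lambda>m. ennreal ((cmod (v k x - v m x))\<^sup>2)) \<partial>M)"
    proof (rule nn_integral_cong_AE)
      show "AE x in M. ennreal ((cmod (v k x - h x))\<^sup>2) = liminf (\<lambda>m. ennreal ((cmod (v k x - v m x))\<^sup>2))"
        using hconv
      proof eventually_elim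
        case (elim x)
        have "(\<lambda>m. ennreal ((cmod (v k x - v m x))\<^sup>2)) \<longlonglongrightarrow> ennreal ((cmod (v k x - h x))\<^sup>2)"
          by (intro tendsto_ennrealI tendsto_intros elim)
        thus ?case by (subst lim_imp_Liminf) auto
      qed
    qed
    also have "\<dots> \<le> liminf (\<lambda>m. \<integral>\<^sup>+x. ennreal ((cmod (v k x - v m x))\<^sup>2) \<partial>M)"
      by (rule nn_integral_liminf) measurable
    also have "\<dots> \<le> limsup (\<lambda>m. \<integral>\<^sup>+x. ennreal ((cmod (v k x - v m x))\<^sup>2) \<partial>M)"
      by (rule Liminf_le_Limsup) simp
    also have "\<dots> \<le> ennreal ((1/16)^k)"
    proof (rule Limsup_bounded)
      show "\<forall>\<^sub>F m in sequentially. (\<integral>\<^sup>+x. ennreal ((cmod (v k x - v m x))\<^sup>2) \<partial>M) \<le> ennreal ((1/16)^k)"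
        unfolding eventually_sequentially
      proof (intro exI allI impI)
        fix m assume "k \<le> m"
        hence "L2_norm M (\<lambda>x. v k x - v m x) ^ 2 \<le> ((1/4)^k)^2"
          using vclose[of k m] L2_norm_nonneg[of M] by (intro power_mono) auto
        also have "((1/4::real)^k)^2 = (1/16)^k" by (rule quarter)
        finally show "(\<integral>\<^sup>+x. ennreal ((cmod (v k x - v m x))\<^sup>2) \<partial>M) \<le> ennreal ((1/16)^k)"
          using L2_nn[OF L2_diff[OF v v], of k m] by simp
      qed
    qed
    finally show ?thesis .
  qed
  have vhL2: "(\<lambda>x. v k x - h x) \<in> L2 M" for k
  proof (rule L2I)
    show "(\<lambda>x. v k x - h x) \<in> borel_measurable M" by measurable
    show "integrable M (\<lambda>x. (cmod (v k x - h x))\<^sup>2)"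
      by (rule integrableI_bounded) (use vh[of k] in \<open>auto simp: le_less_trans\<close>)
  qed
  have hL2: "h \<in> L2 M"
  proof -
    have "(\<lambda>x. v 0 x - (v 0 x - h x)) \<in> L2 M" by (intro L2_diff v vhL2)
    thus ?thesis by simp
  qed
  have vhn: "L2_norm M (\<lambda>x. v k x - h x) \<le> (1/4)^k" for k
  proof -
    have "ennreal (L2_norm M (\<lambda>x. v k x - h x) ^ 2) \<le> ennreal ((1/16)^k)"
      using vh[of k] L2_nn[OF vhL2[of k]] by simp
    hence "L2_norm M (\<lambda>x. v k x - h x) ^ 2 \<le> ((1/4)^k)^2"
      by (simp add: quarter)
    thus ?thesis by (rule power2_le_imp_le) simp
  qed
  have "(\<lambda>n. L2_norm M (\<lambda>x. w n x - h x)) \<longlonglongrightarrow> 0"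
  proof (rule LIMSEQ_I)
    fix e :: real assume e: "0 < e"
    obtain k where k: "(1/4::real)^k < e/2" using real_arch_pow_inv[of "e/2" "1/4"] e by auto
    show "\<exists>no. \<forall>n\<ge>no. norm (L2_norm M (\<lambda>x. w n x - h x) - 0) < e"
    proof (intro exI allI impI)
      fix n assume n: "N k \<le> n"
      have "L2_norm M (\<lambda>x. w n x - h x) \<le> L2_norm M (\<lambda>x. w n x - v k x) + L2_norm M (\<lambda>x. v k x - h x)"
        by (rule L2_triangle3) (auto intro: w v hL2)
      also have "\<dots> < (1/4)^k + (1/4)^k"
        using N[OF n rN[of k]] vhn[of k] unfolding v_def by simp
      finally show "norm (L2_norm M (\<lambda>x. w n x - h x) - 0) < e"
        using k L2_norm_nonneg[of M] by simp
    qed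
  qed
  with hL2 show ?thesis by blast
qed




lemma L2_comp:
  assumes T: "T' \<in> M \<rightarrow>\<^sub>M M" "distr M M T' = M" and f: "f \<in> L2 M"
  shows "(\<lambda>x. f (T' x)) \<in> L2 M" "L2_norm M (\<lambda>x. f (T' x)) = L2_norm M f"
proof -
  have fm[measurable]: "f \<in> borel_measurable M" using f by (rule L2D)
  have Tm[measurable]: "T' \<in> M \<rightarrow>\<^sub>M M" by fact
  have Fm: "(\<lambda>y. (cmod (f y))\<^sup>2) \<in> borel_measurable M" by measurable
  have "integrable (distr M M T') (\<lambda>y. (cmod (f y))\<^sup>2)" using L2D(2)[OF f] T(2) by simp
  hence "integrable M (\<lambda>x. (cmod (f (T' x)))\<^sup>2)" by (subst (asm) integrable_distr_eq[OF Tm Fm])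
  moreover have "(\<lambda>x. f (T' x)) \<in> borel_measurable M" by measurable
  ultimately show "(\<lambda>x. f (T' x)) \<in> L2 M" by (rule L2I[rotated])
  have "(\<integral>x. (cmod (f (T' x)))\<^sup>2 \<partial>M) = (\<integral>y. (cmod (f y))\<^sup>2 \<partial>distr M M T')"
    by (rule integral_distr[symmetric, OF Tm Fm])
  also have "\<dots> = (\<integral>y. (cmod (f y))\<^sup>2 \<partial>M)" using T(2) by simp
  finally show "L2_norm M (\<lambda>x. f (T' x)) = L2_norm M f" by (simp add: L2_norm_def)
qed

lemma L2_comp_diff:
  assumes T: "T' \<in> M \<rightarrow>\<^sub>M M" "distr M M T' = M" and f: "f \<in> L2 M" and h: "h \<in> L2 M"
  shows "L2_norm M (\<lambda>x. f (T' x) - h (T' x)) = L2_norm M (\<lambda>x. f x - h x)"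
  using L2_comp(2)[OF T L2_diff[OF f h]] by simp

lemma image_seq_obtain:
  assumes "\<forall>n. u n \<in> (\<lambda>g. F g) ` S"
  obtains g where "\<And>n. g n \<in> S" "\<And>n. u n = F (g n)"
proof -
  from assms have "\<forall>n. \<exists>g. g \<in> S \<and> u n = F g" by blast
  then obtain g where "\<forall>n. g n \<in> S \<and> u n = F (g n)" by metis
  thus ?thesis using that by blast
qed

locale mp_ctx =
  fixes M :: "'a measure" and T :: "'g \<Rightarrow> 'a \<Rightarrow> 'a" and S :: "'g set"
  assumes mp: "\<And>g. g \<in> S \<Longrightarrow> T g \<in> M \<rightarrow>\<^sub>M M" "\<And>g. g \<in> S \<Longrightarrow> distr M M (T g) = M"
begin

lemma AP_L2: "almost_periodic M T S f \<Longrightarrow> f \<in> L2 M"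
  by (simp add: almost_periodic_def)

lemma AP_prec:
  fixes g :: "nat \<Rightarrow> 'g"
  assumes "almost_periodic M T S f" "\<And>n. g n \<in> S"
  shows "\<exists>r a. strict_mono r \<and> a \<in> L2 M \<and> (\<lambda>n. L2_norm M (\<lambda>x. f (T (g (r n)) x) - a x)) \<longlonglongrightarrow> 0"
proof -
  have prec: "L2_precompact M ((\<lambda>g. f \<circ> T g) ` S)" using assms(1) by (simp add: almost_periodic_def)
  have mem: "\<And>n. f \<circ> T (g n) \<in> (\<lambda>g. f \<circ> T g) ` S" using assms(2) by auto
  obtain r a where "strict_mono r" "a \<in> L2 M" "(\<lambda>n. L2_norm M (\<lambda>x. (f \<circ> T (g (r n))) x - a x)) \<longlonglongrightarrow> 0"
    using prec[unfolded L2_precompact_def, rule_format, of "\<lambda>n. f \<circ> T (g n)", OF mem] by blast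
  thus ?thesis by (auto simp: o_def)
qed

lemma AP_zero: "almost_periodic M T S (\<lambda>x. 0)"
  unfolding almost_periodic_def L2_precompact_def
proof (intro conjI allI impI)
  show z: "(\<lambda>x. 0) \<in> L2 M" by (rule L2I) auto
  fix u :: "nat \<Rightarrow> 'a \<Rightarrow> complex" assume "\<forall>n. u n \<in> (\<lambda>g. (\<lambda>x. 0) \<circ> T g) ` S"
  hence "u n = (\<lambda>x. 0)" for n by (auto simp: o_def)
  hence "(\<lambda>n. L2_norm M (\<lambda>x. u (id n) x - 0)) \<longlonglongrightarrow> 0" by (simp add: L2_norm_def)
  with z show "\<exists>r h. strict_mono r \<and> h \<in> L2 M \<and> (\<lambda>n. L2_norm M (\<lambda>x. u (r n) x - h x)) \<longlonglongrightarrow> 0"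
    by (intro exI[of _ id] exI[of _ "\<lambda>x. 0"]) (auto simp: strict_mono_def)
qed

lemma sandwich0:
  fixes x y z :: "nat \<Rightarrow> real"
  assumes "\<And>n. 0 \<le> x n" "\<And>n. x n \<le> y n + z n" "y \<longlonglongrightarrow> 0" "z \<longlonglongrightarrow> 0"
  shows "x \<longlonglongrightarrow> 0"
proof (rule tendsto_sandwich[of "\<lambda>_. 0" _ _ "\<lambda>n. y n + z n"])
  show "(\<lambda>n. y n + z n) \<longlonglongrightarrow> 0" using tendsto_add[OF assms(3,4)] by simp
qed (use assms in auto)

lemma AP_add:
  assumes f: "almost_periodic M T S f" and h: "almost_periodic M T S h"
  shows "almost_periodic M T S (\<lambda>x. f x + h x)"
  unfolding almost_periodic_def L2_precompact_def
proof (intro conjI allI impI)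
  show "(\<lambda>x. f x + h x) \<in> L2 M" using f h by (intro L2_add AP_L2)
  fix u :: "nat \<Rightarrow> 'a \<Rightarrow> complex" assume "\<forall>n. u n \<in> (\<lambda>g. (\<lambda>x. f x + h x) \<circ> T g) ` S"
  then obtain g where g: "\<And>n. g n \<in> S" and u: "\<And>n. u n = (\<lambda>x. f x + h x) \<circ> T (g n)"
    by (rule image_seq_obtain) blast
  obtain r1 a where r1: "strict_mono r1" and a: "a \<in> L2 M"
    and la: "(\<lambda>n. L2_norm M (\<lambda>x. f (T (g (r1 n)) x) - a x)) \<longlonglongrightarrow> 0"
    using AP_prec[where g=g, OF f g] by blast
  obtain r2 b where r2: "strict_mono r2" and b: "b \<in> L2 M"
    and lb: "(\<lambda>n. L2_norm M (\<lambda>x. h (T (g (r1 (r2 n))) x) - b x)) \<longlonglongrightarrow> 0"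
    using AP_prec[where g="\<lambda>n. g (r1 n)", OF h g] by blast
  have la': "(\<lambda>n. L2_norm M (\<lambda>x. f (T (g (r1 (r2 n))) x) - a x)) \<longlonglongrightarrow> 0"
    using LIMSEQ_subseq_LIMSEQ[OF la r2] by (simp add: o_def)
  have fg: "(\<lambda>x. f (T (g n) x)) \<in> L2 M" for n using L2_comp(1)[OF mp[OF g] AP_L2[OF f]] .
  have hg: "(\<lambda>x. h (T (g n) x)) \<in> L2 M" for n using L2_comp(1)[OF mp[OF g] AP_L2[OF h]] .
  show "\<exists>r c. strict_mono r \<and> c \<in> L2 M \<and> (\<lambda>n. L2_norm M (\<lambda>x. u (r n) x - c x)) \<longlonglongrightarrow> 0"
  proof (intro exI conjI)
    show "strict_mono (r1 \<circ> r2)" using r1 r2 by (rule strict_mono_o)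
    show "(\<lambda>x. a x + b x) \<in> L2 M" using a b by (rule L2_add)
    show "(\<lambda>n. L2_norm M (\<lambda>x. u ((r1 \<circ> r2) n) x - (a x + b x))) \<longlonglongrightarrow> 0"
    proof (rule sandwich0[OF _ _ la' lb])
      fix n
      show "0 \<le> L2_norm M (\<lambda>x. u ((r1 \<circ> r2) n) x - (a x + b x))" by (rule L2_norm_nonneg)
      have "L2_norm M (\<lambda>x. u ((r1 \<circ> r2) n) x - (a x + b x)) =
        L2_norm M (\<lambda>x. (f (T (g (r1 (r2 n))) x) - a x) + (h (T (g (r1 (r2 n))) x) - b x))"
        by (simp add: u o_def diff_add_eq add_diff_eq diff_diff_eq)
      also have "\<dots> \<le> L2_norm M (\<lambda>x. f (T (g (r1 (r2 n))) x) - a x) + L2_norm M (\<lambda>x. h (T (g (r1 (r2 n))) x) - b x)"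
        by (intro L2_triangle L2_diff fg hg a b)
      finally show "L2_norm M (\<lambda>x. u ((r1 \<circ> r2) n) x - (a x + b x)) \<le> \<dots>" .
    qed
  qed
qed

lemma AP_scale:
  assumes f: "almost_periodic M T S f"
  shows "almost_periodic M T S (\<lambda>x. c * f x)"
  unfolding almost_periodic_def L2_precompact_def
proof (intro conjI allI impI)
  show "(\<lambda>x. c * f x) \<in> L2 M" using f by (intro L2_scale AP_L2)
  fix u :: "nat \<Rightarrow> 'a \<Rightarrow> complex" assume "\<forall>n. u n \<in> (\<lambda>g. (\<lambda>x. c * f x) \<circ> T g) ` S"
  then obtain g where g: "\<And>n. g n \<in> S" and u: "\<And>n. u n = (\<lambda>x. c * f x) \<circ> T (g n)"
    by (rule image_seq_obtain) blast
  obtain r1 a where r1: "strict_mono r1" and a: "a \<in> L2 M"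
    and la: "(\<lambda>n. L2_norm M (\<lambda>x. f (T (g (r1 n)) x) - a x)) \<longlonglongrightarrow> 0"
    using AP_prec[where g=g, OF f g] by blast
  have fg: "(\<lambda>x. f (T (g n) x)) \<in> L2 M" for n using L2_comp(1)[OF mp[OF g] AP_L2[OF f]] .
  show "\<exists>r h. strict_mono r \<and> h \<in> L2 M \<and> (\<lambda>n. L2_norm M (\<lambda>x. u (r n) x - h x)) \<longlonglongrightarrow> 0"
  proof (intro exI conjI)
    show "strict_mono r1" by fact
    show "(\<lambda>x. c * a x) \<in> L2 M" using a by (rule L2_scale)
    have eq: "L2_norm M (\<lambda>x. u (r1 n) x - c * a x) = cmod c * L2_norm M (\<lambda>x. f (T (g (r1 n)) x) - a x)" for n
    proof -
      have "L2_norm M (\<lambda>x. u (r1 n) x - c * a x) = L2_norm M (\<lambda>x. c * (f (T (g (r1 n)) x) - a x))"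
        by (simp add: u o_def right_diff_distrib)
      also have "\<dots> = cmod c * L2_norm M (\<lambda>x. f (T (g (r1 n)) x) - a x)"
        by (intro L2_scale(2) L2_diff fg a)
      finally show ?thesis .
    qed
    show "(\<lambda>n. L2_norm M (\<lambda>x. u (r1 n) x - c * a x)) \<longlonglongrightarrow> 0"
      unfolding eq using tendsto_mult[OF tendsto_const la, of "cmod c"] by simp
  qed
qed

end



context mp_ctx begin

lemma AP_closed:
  assumes u: "\<And>n. almost_periodic M T S (u n)" and f: "f \<in> L2 M"
    and lim: "(\<lambda>n. L2_norm M (\<lambda>x. u n x - f x)) \<longlonglongrightarrow> 0"
  shows "almost_periodic M T S f"
  unfolding almost_periodic_def L2_precompact_def
proof (intro conjI allI impI)
  show "f \<in> L2 M" by fact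
  fix w :: "nat \<Rightarrow> 'a \<Rightarrow> complex" assume "\<forall>n. w n \<in> (\<lambda>g. f \<circ> T g) ` S"
  then obtain g where g: "\<And>n. g n \<in> S" and w: "\<And>n. w n = f \<circ> T (g n)"
    by (rule image_seq_obtain) blast
  define P where "P k s \<longleftrightarrow> (\<exists>h\<in>L2 M. (\<lambda>i. L2_norm M (\<lambda>x. u k (T (g (s i)) x) - h x)) \<longlonglongrightarrow> 0)"
    for k and s :: "nat \<Rightarrow> nat"
  interpret subseqs P
  proof
    fix k and s :: "nat \<Rightarrow> nat" assume s: "strict_mono s"
    obtain r' a where "strict_mono r'" "a \<in> L2 M"
      "(\<lambda>n. L2_norm M (\<lambda>x. u k (T (g (s (r' n))) x) - a x)) \<longlonglongrightarrow> 0"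
      using AP_prec[where g="\<lambda>n. g (s n)", OF u g] by blast
    thus "\<exists>r'. strict_mono r' \<and> P k (s \<circ> r')" unfolding P_def by (auto simp: o_def)
  qed
  have stable: "P n (s \<circ> r)" if "strict_mono r" "P n s" for r s n
  proof -
    from that(2) obtain h where h: "h \<in> L2 M" "(\<lambda>i. L2_norm M (\<lambda>x. u n (T (g (s i)) x) - h x)) \<longlonglongrightarrow> 0"
      unfolding P_def by blast
    from LIMSEQ_subseq_LIMSEQ[OF h(2) that(1)] h(1) show ?thesis unfolding P_def by (auto simp: o_def)
  qed
  define D where "D = diagseq"
  have D: "strict_mono D" unfolding D_def by (rule subseq_diagseq)
  have PD: "P k (D \<circ> (+) (Suc k))" for k unfolding D_def by (rule diagseq_holds) (rule stable)
  define W where "W i = (\<lambda>x. f (T (g (D i)) x))" for i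
  have uL2: "u k \<in> L2 M" for k using u by (rule AP_L2)
  have WL2: "W i \<in> L2 M" for i unfolding W_def by (rule L2_comp(1)[OF mp[OF g] f])
  have UL2: "(\<lambda>x. u k (T (g (D i)) x)) \<in> L2 M" for k i by (rule L2_comp(1)[OF mp[OF g] uL2])
  have WU: "L2_norm M (\<lambda>x. W i x - u k (T (g (D i)) x)) = L2_norm M (\<lambda>x. f x - u k x)" for i k
    unfolding W_def by (rule L2_comp_diff[OF mp[OF g] f uL2])
  have cauchy: "\<exists>N. \<forall>i\<ge>N. \<forall>j\<ge>N. L2_norm M (\<lambda>x. W i x - W j x) < e" if e: "e > 0" for e
  proof -
    obtain k0 where k0: "\<And>n. n \<ge> k0 \<Longrightarrow> norm (L2_norm M (\<lambda>x. u n x - f x) - 0) < e/4"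
      using LIMSEQ_D[OF lim, of "e/4"] e by auto
    define k where "k = k0"
    have k: "L2_norm M (\<lambda>x. u k x - f x) < e/4" using k0[of k0] L2_norm_nonneg[of M] by (simp add: k_def)
    from PD[of k] obtain hk where hk: "hk \<in> L2 M"
      and lk: "(\<lambda>i. L2_norm M (\<lambda>x. u k (T (g ((D \<circ> (+) (Suc k)) i)) x) - hk x)) \<longlonglongrightarrow> 0"
      unfolding P_def by blast
    obtain N0 where N0': "\<And>i. i \<ge> N0 \<Longrightarrow> norm (L2_norm M (\<lambda>x. u k (T (g ((D \<circ> (+) (Suc k)) i)) x) - hk x) - 0) < e/8"
      using LIMSEQ_D[OF lk, of "e/8"] e by auto
    have N0: "L2_norm M (\<lambda>x. u k (T (g (D (Suc k + i))) x) - hk x) < e/8" if "i \<ge> N0" for i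
      using N0'[OF that] L2_norm_nonneg[of M] by simp
    have close: "L2_norm M (\<lambda>x. u k (T (g (D i)) x) - hk x) < e/8" if "i \<ge> Suc k + N0" for i
      using N0[of "i - Suc k"] that by simp
    show ?thesis
    proof (intro exI allI impI)
      fix i j assume i: "Suc k + N0 \<le> i" and j: "Suc k + N0 \<le> j"
      let ?Ui = "\<lambda>x. u k (T (g (D i)) x)" and ?Uj = "\<lambda>x. u k (T (g (D j)) x)"
      have "L2_norm M (\<lambda>x. W i x - W j x) \<le> L2_norm M (\<lambda>x. W i x - ?Ui x) + L2_norm M (\<lambda>x. ?Ui x - W j x)"
        by (rule L2_triangle3[OF WL2 UL2 WL2])
      also have "L2_norm M (\<lambda>x. ?Ui x - W j x) \<le> L2_norm M (\<lambda>x. ?Ui x - ?Uj x) + L2_norm M (\<lambda>x. ?Uj x - W j x)"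
        by (rule L2_triangle3[OF UL2 UL2 WL2])
      also have "L2_norm M (\<lambda>x. ?Ui x - ?Uj x) \<le> L2_norm M (\<lambda>x. ?Ui x - hk x) + L2_norm M (\<lambda>x. hk x - ?Uj x)"
        by (rule L2_triangle3[OF UL2 hk UL2])
      finally have "L2_norm M (\<lambda>x. W i x - W j x) \<le> L2_norm M (\<lambda>x. W i x - ?Ui x) +
          (L2_norm M (\<lambda>x. ?Ui x - hk x) + L2_norm M (\<lambda>x. hk x - ?Uj x) + L2_norm M (\<lambda>x. ?Uj x - W j x))"
        by simp
      moreover have "L2_norm M (\<lambda>x. W i x - ?Ui x) < e/4" using WU[of i k] k L2_norm_commute[of M f "u k"] by simp
      moreover have "L2_norm M (\<lambda>x. ?Uj x - W j x) < e/4"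
        using WU[of j k] k L2_norm_commute[of M f "u k"] L2_norm_commute[of M "W j" ?Uj] by simp
      moreover have "L2_norm M (\<lambda>x. ?Ui x - hk x) < e/8" using close[OF i] .
      moreover have "L2_norm M (\<lambda>x. hk x - ?Uj x) < e/8" using close[OF j] L2_norm_commute[of M hk ?Uj] by simp
      ultimately show "L2_norm M (\<lambda>x. W i x - W j x) < e" using e by linarith
    qed
  qed
  obtain h where h: "h \<in> L2 M" "(\<lambda>n. L2_norm M (\<lambda>x. W n x - h x)) \<longlonglongrightarrow> 0"
    using L2_complete[OF WL2 cauchy] by blast
  show "\<exists>r h. strict_mono r \<and> h \<in> L2 M \<and> (\<lambda>n. L2_norm M (\<lambda>x. w (r n) x - h x)) \<longlonglongrightarrow> 0"
    using D h by (intro exI[of _ D] exI[of _ h]) (simp add: w W_def o_def)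
qed

end



definition ent :: "'a measure \<Rightarrow> ('a \<Rightarrow> 'c) \<Rightarrow> real" where
  "ent M X = - (\<Sum>v\<in>X ` space M. measure M (X -` {v} \<inter> space M) * ln (measure M (X -` {v} \<inter> space M)))"

lemma ent_cong: "(\<And>x. x \<in> space M \<Longrightarrow> X x = Y x) \<Longrightarrow> ent M X = ent M Y"
proof -
  assume eq: "\<And>x. x \<in> space M \<Longrightarrow> X x = Y x"
  have img: "X ` space M = Y ` space M" using eq by (auto simp: image_def)
  have pre: "X -` {v} \<inter> space M = Y -` {v} \<inter> space M" for v using eq by auto
  show ?thesis unfolding ent_def img pre ..
qed

context prob_space begin

lemma ent_eq:
  assumes X: "simple_function M X"
  shows "ent M X = entropy (exp 1) (count_space (X ` space M)) X"
proof -
  interpret I: information_space M "exp 1" by standard simp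
  show ?thesis
    using I.entropy_simple_distributed[OF simple_distributedI[OF X measure_nonneg refl]]
    by (simp add: ent_def log_ln[symmetric])
qed

lemma ent_pair_le:
  assumes X: "simple_function M X" and Y: "simple_function M Y"
  shows "ent M (\<lambda>x. (X x, Y x)) \<le> ent M X + ent M Y"
proof -
  interpret I: information_space M "exp 1" by standard simp
  have "ent M (\<lambda>x. (X x, Y x)) = entropy (exp 1) (count_space (X ` space M)) X +
     conditional_entropy (exp 1) (count_space (Y ` space M)) (count_space (X ` space M)) Y X"
    using ent_eq[OF simple_function_Pair[OF X Y]] I.entropy_chain_rule[OF X Y] by simp
  also have "conditional_entropy (exp 1) (count_space (Y ` space M)) (count_space (X ` space M)) Y X
      \<le> entropy (exp 1) (count_space (Y ` space M)) Y"
    by (rule I.conditional_entropy_less_eq_entropy[OF Y X])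
  finally show ?thesis using ent_eq[OF X] ent_eq[OF Y] by simp
qed

lemma ent_comp_le:
  assumes X: "simple_function M X"
  shows "ent M (f \<circ> X) \<le> ent M X"
proof -
  interpret I: information_space M "exp 1" by standard simp
  show ?thesis using I.entropy_data_processing[OF X, of f] ent_eq[OF X] ent_eq[OF simple_function_compose[OF X, of f]]
    by simp
qed

lemma ent_nonneg: "0 \<le> ent M X"
proof -
  have "measure M A * ln (measure M A) \<le> 0" for A
  proof (cases "measure M A = 0")
    case False
    hence "0 < measure M A" using measure_nonneg[of M A] by linarith
    moreover have "measure M A \<le> 1" by (rule prob_le_1)
    ultimately have "ln (measure M A) \<le> 0" by simp
    thus ?thesis using measure_nonneg[of M A] by (simp add: mult_nonneg_nonpos)
  qed simp
  thus ?thesis unfolding ent_def by (simp add: sum_nonpos)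
qed

lemma ent_superset:
  assumes "finite W" "X ` space M \<subseteq> W"
  shows "ent M X = - (\<Sum>v\<in>W. measure M (X -` {v} \<inter> space M) * ln (measure M (X -` {v} \<inter> space M)))"
  unfolding ent_def
proof (rule arg_cong[where f=uminus], rule sum.mono_neutral_left)
  show "\<forall>i\<in>W - X ` space M. measure M (X -` {i} \<inter> space M) * ln (measure M (X -` {i} \<inter> space M)) = 0"
  proof
    fix i assume "i \<in> W - X ` space M"
    hence "X -` {i} \<inter> space M = {}" by auto
    thus "measure M (X -` {i} \<inter> space M) * ln (measure M (X -` {i} \<inter> space M)) = 0" by simp
  qed
qed (use assms in auto)

end



definition V :: "('g \<Rightarrow> 'a \<Rightarrow> 'a) \<Rightarrow> 'a set \<Rightarrow> 'g list \<Rightarrow> 'a \<Rightarrow> bool list" where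
  "V T A gs x = map (\<lambda>g. T g x \<in> A) gs"

lemma V_Nil[simp]: "V T A [] = (\<lambda>x. [])" by (simp add: V_def fun_eq_iff)
lemma V_Cons: "V T A (g # gs) x = (T g x \<in> A) # V T A gs x" by (simp add: V_def)
lemma length_V[simp]: "length (V T A gs x) = length gs" by (simp add: V_def)

lemma finite_bool_lists: "finite {v :: bool list. length v = n}"
  using finite_lists_length_eq[of "UNIV :: bool set" n] by simp

lemma part_entropy_image:
  assumes W: "finite W" "X ` space M \<subseteq> W" and P: "prob_space M"
  shows "part_entropy M ((\<lambda>v. X -` {v} \<inter> space M) ` W) = ent M X"
proof -
  interpret prob_space M by fact
  let ?h = "\<lambda>v. X -` {v} \<inter> space M"
  let ?g = "\<lambda>B. measure M B * ln (measure M B)"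
  have "(\<Sum>B\<in>?h ` W. ?g B) = (\<Sum>v\<in>W. ?g (?h v))"
  proof (subst sum.reindex_nontrivial[OF W(1)])
    show "?g (?h v) = 0" if "v \<in> W" "w \<in> W" "v \<noteq> w" "?h v = ?h w" for v w
    proof -
      from that have "?h v = {}" by blast
      thus ?thesis by simp
    qed
  qed (simp add: o_def)
  thus ?thesis unfolding part_entropy_def using ent_superset[OF W(1,2)] by simp
qed

locale ent_ctx =
  fixes M :: "'a measure" and G :: "('g, 'b) monoid_scheme" and T :: "'g \<Rightarrow> 'a \<Rightarrow> 'a"
  assumes sys: "mps M G T"
begin

sublocale prob_space M using sys by (simp add: mps_def)

lemma grp: "group G" using sys by (simp add: mps_def)
lemma Tm[measurable]: "g \<in> carrier G \<Longrightarrow> T g \<in> M \<rightarrow>\<^sub>M M" using sys by (simp add: mps_def)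
lemma Td: "g \<in> carrier G \<Longrightarrow> distr M M (T g) = M" using sys by (simp add: mps_def)
lemma Tmul: "g \<in> carrier G \<Longrightarrow> h \<in> carrier G \<Longrightarrow> x \<in> space M \<Longrightarrow> T (g \<otimes>\<^bsub>G\<^esub> h) x = T g (T h x)"
  using sys by (simp add: mps_def)
lemma Tspace: "g \<in> carrier G \<Longrightarrow> x \<in> space M \<Longrightarrow> T g x \<in> space M"
  by (rule measurable_space[OF Tm])

lemma sf_ind:
  assumes g: "g \<in> carrier G" and A: "A \<in> sets M"
  shows "simple_function M (\<lambda>x. T g x \<in> A)"
  unfolding simple_function_def
proof
  show "finite ((\<lambda>x. T g x \<in> A) ` space M)" by (rule finite_subset[of _ UNIV]) auto
  show "\<forall>b\<in>(\<lambda>x. T g x \<in> A) ` space M. (\<lambda>x. T g x \<in> A) -` {b} \<inter> space M \<in> sets M"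
  proof
    fix b
    have 1: "T g -` A \<inter> space M \<in> sets M" using Tm[OF g] A by (rule measurable_sets)
    show "(\<lambda>x. T g x \<in> A) -` {b} \<inter> space M \<in> sets M"
    proof (cases b)
      case True
      hence "(\<lambda>x. T g x \<in> A) -` {b} \<inter> space M = T g -` A \<inter> space M" by auto
      thus ?thesis using 1 by simp
    next
      case False
      hence "(\<lambda>x. T g x \<in> A) -` {b} \<inter> space M = space M - (T g -` A \<inter> space M)" by auto
      thus ?thesis using 1 by auto
    qed
  qed
qed

lemma sf_V:
  assumes "set gs \<subseteq> carrier G" "A \<in> sets M"
  shows "simple_function M (V T A gs)"
  using assms(1)
proof (induction gs)
  case Nil thus ?case by simp
next
  case (Cons g gs)
  have eq: "V T A (g # gs) = (\<lambda>(b, l). b # l) \<circ> (\<lambda>x. (T g x \<in> A, V T A gs x))"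
    by (simp add: fun_eq_iff V_Cons)
  show ?case unfolding eq
    by (intro simple_function_compose simple_function_Pair sf_ind assms(2) Cons.IH) (use Cons.prems in auto)
qed

lemma ent_V_Cons:
  assumes "g \<in> carrier G" "set gs \<subseteq> carrier G" "A \<in> sets M"
  shows "ent M (V T A (g # gs)) \<le> ent M (\<lambda>x. T g x \<in> A) + ent M (V T A gs)"
proof -
  have eq: "V T A (g # gs) = (\<lambda>(b, l). b # l) \<circ> (\<lambda>x. (T g x \<in> A, V T A gs x))"
    by (simp add: fun_eq_iff V_Cons)
  have "ent M (V T A (g # gs)) \<le> ent M (\<lambda>x. (T g x \<in> A, V T A gs x))"
    unfolding eq by (intro ent_comp_le simple_function_Pair sf_ind sf_V assms)
  also have "\<dots> \<le> ent M (\<lambda>x. T g x \<in> A) + ent M (V T A gs)"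
    by (intro ent_pair_le sf_ind sf_V assms)
  finally show ?thesis .
qed

lemma ent_ind_inv:
  assumes g: "g \<in> carrier G" and A: "A \<in> sets M"
  shows "ent M (\<lambda>x. T g x \<in> A) = ent M (\<lambda>x. x \<in> A)"
proof -
  have "measure M ((\<lambda>x. T g x \<in> A) -` {b} \<inter> space M) = measure M ((\<lambda>x. x \<in> A) -` {b} \<inter> space M)" for b
  proof -
    have B: "(\<lambda>x. x \<in> A) -` {b} \<inter> space M \<in> sets M"
    proof -
      have "(\<lambda>x. x \<in> A) -` {b} \<inter> space M = (if b then A \<inter> space M else space M - A)" by auto
      thus ?thesis using A by auto
    qed
    have "(\<lambda>x. T g x \<in> A) -` {b} \<inter> space M = T g -` ((\<lambda>x. x \<in> A) -` {b} \<inter> space M) \<inter> space M"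
      using Tspace[OF g] by auto
    also have "measure M \<dots> = measure (distr M M (T g)) ((\<lambda>x. x \<in> A) -` {b} \<inter> space M)"
      by (rule measure_distr[symmetric, OF Tm[OF g] B[simplified sets_distr]])
    also have "\<dots> = measure M ((\<lambda>x. x \<in> A) -` {b} \<inter> space M)" using Td[OF g] by simp
    finally show ?thesis .
  qed
  thus ?thesis
    using ent_superset[of UNIV "\<lambda>x. T g x \<in> A"] ent_superset[of UNIV "\<lambda>x. x \<in> A"] by simp
qed

lemma ent_V_Nil: "ent M (V T A []) = 0"
proof -
  have "(\<lambda>x. []) ` space M \<subseteq> {[]}" by auto
  thus ?thesis using ent_superset[of "{[]}" "V T A []"] by (simp add: prob_space)
qed

lemma ent_V_bound:
  assumes "set gs \<subseteq> carrier G" "A \<in> sets M"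
  shows "ent M (V T A gs) \<le> real (length gs) * ent M (\<lambda>x. x \<in> A)"
  using assms(1)
proof (induction gs)
  case Nil thus ?case using ent_V_Nil by simp
next
  case (Cons g gs)
  have "ent M (V T A (g # gs)) \<le> ent M (\<lambda>x. T g x \<in> A) + ent M (V T A gs)"
    using Cons.prems assms(2) by (intro ent_V_Cons) auto
  also have "\<dots> \<le> ent M (\<lambda>x. x \<in> A) + real (length gs) * ent M (\<lambda>x. x \<in> A)"
    using Cons ent_ind_inv[of g A] assms(2) by auto
  finally show ?case by (simp add: algebra_simps)
qed

lemma ent_V_union:
  assumes "set gs \<subseteq> carrier G" "B \<in> sets M" "D \<in> sets M"
  shows "ent M (V T (B \<union> D) gs) \<le> ent M (V T B gs) + ent M (V T D gs)"
proof -
  have eq: "V T (B \<union> D) gs = (\<lambda>(l1, l2). map (\<lambda>(a, b). a \<or> b) (zip l1 l2)) \<circ> (\<lambda>x. (V T B gs x, V T D gs x))"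
  proof
    fix x show "V T (B \<union> D) gs x = ((\<lambda>(l1, l2). map (\<lambda>(a, b). a \<or> b) (zip l1 l2)) \<circ> (\<lambda>x. (V T B gs x, V T D gs x))) x"
      by (induction gs) (auto simp: V_Cons)
  qed
  have "ent M (V T (B \<union> D) gs) \<le> ent M (\<lambda>x. (V T B gs x, V T D gs x))"
    unfolding eq by (intro ent_comp_le simple_function_Pair sf_V assms)
  also have "\<dots> \<le> ent M (V T B gs) + ent M (V T D gs)"
    by (intro ent_pair_le sf_V assms)
  finally show ?thesis .
qed

end



definition aseq :: "('l list \<Rightarrow> real) \<Rightarrow> 'l set \<Rightarrow> nat \<Rightarrow> ereal" where
  "aseq F S n = ereal (1 / real n) * Sup (insert 0 ((\<lambda>gs. ereal (F gs)) ` {gs. set gs \<subseteq> S \<and> length gs = n}))"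

lemma aseq_cong:
  assumes "\<And>gs. set gs \<subseteq> S \<Longrightarrow> F gs = F' gs"
  shows "aseq F S = aseq F' S"
proof
  fix n
  have "(\<lambda>gs. ereal (F gs)) ` {gs. set gs \<subseteq> S \<and> length gs = n} = (\<lambda>gs. ereal (F' gs)) ` {gs. set gs \<subseteq> S \<and> length gs = n}"
    using assms by (intro image_cong) auto
  thus "aseq F S n = aseq F' S n" by (simp add: aseq_def)
qed

lemma Sup_ins0_nonneg: "0 \<le> Sup (insert (0::ereal) X)"
  by (rule Sup_upper) simp

lemma aseq_nonneg_n: "0 \<le> aseq F S n"
  unfolding aseq_def by (intro ereal_0_le_mult Sup_ins0_nonneg) simp

lemma aseq_limsup_nonneg: "0 \<le> limsup (aseq F S)"
proof -
  have "0 \<le> liminf (aseq F S)" by (intro Liminf_bounded always_eventually allI aseq_nonneg_n)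
  also have "\<dots> \<le> limsup (aseq F S)" by (rule Liminf_le_Limsup) simp
  finally show ?thesis .
qed

lemma aseq_zero: "aseq (\<lambda>_. 0) S n = 0"
  unfolding aseq_def by (simp add: image_constant_conv)

lemma aseq_le:
  assumes le: "\<And>gs. set gs \<subseteq> S \<Longrightarrow> F gs \<le> G gs + H gs + c * real (length gs)"
    and G: "\<And>gs. 0 \<le> G gs" and H: "\<And>gs. 0 \<le> H gs" and c: "0 \<le> c"
  shows "limsup (aseq F S) \<le> limsup (aseq G S) + limsup (aseq H S) + ereal c"
proof -
  have n: "aseq F S n \<le> aseq G S n + aseq H S n + ereal c" for n
  proof -
    let ?L = "{gs. set gs \<subseteq> S \<and> length gs = n}"
    define SF where "SF = Sup (insert 0 ((\<lambda>gs. ereal (F gs)) ` ?L))"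
    define SG where "SG = Sup (insert 0 ((\<lambda>gs. ereal (G gs)) ` ?L))"
    define SH where "SH = Sup (insert 0 ((\<lambda>gs. ereal (H gs)) ` ?L))"
    have SG0: "0 \<le> SG" and SH0: "0 \<le> SH" unfolding SG_def SH_def by (rule Sup_ins0_nonneg)+
    have cn: "0 \<le> ereal (c * real n)" using c by simp
    have "SF \<le> SG + SH + ereal (c * real n)"
      unfolding SF_def
    proof (rule Sup_least)
      fix y assume "y \<in> insert 0 ((\<lambda>gs. ereal (F gs)) ` ?L)"
      then consider "y = 0" | gs where "gs \<in> ?L" "y = ereal (F gs)" by blast
      thus "y \<le> SG + SH + ereal (c * real n)"
      proof cases
        case 1 thus ?thesis using SG0 SH0 cn by (simp add: add_nonneg_nonneg)
      next
        case 2
        have "y \<le> ereal (G gs) + ereal (H gs) + ereal (c * real n)" using 2 le[of gs] by simp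
        also have "\<dots> \<le> SG + SH + ereal (c * real n)"
          unfolding SG_def SH_def using 2(1) by (intro add_mono Sup_upper) auto
        finally show ?thesis .
      qed
    qed
    hence "ereal (1 / real n) * SF \<le> ereal (1 / real n) * (SG + SH + ereal (c * real n))"
      by (rule ereal_mult_left_mono) simp
    also have "\<dots> \<le> ereal (1 / real n) * (SG + SH) + ereal (1 / real n) * ereal (c * real n)"
      by (rule ereal_le_distrib)
    also have "\<dots> \<le> ereal (1 / real n) * SG + ereal (1 / real n) * SH + ereal (1 / real n) * ereal (c * real n)"
      by (intro add_mono ereal_le_distrib order_refl)
    also have "ereal (1 / real n) * ereal (c * real n) \<le> ereal c"
      using c by (cases "n = 0") auto
    finally show ?thesis unfolding SF_def SG_def SH_def aseq_def by (simp add: add_mono)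
  qed
  have "limsup (aseq F S) \<le> limsup (\<lambda>n. (aseq G S n + aseq H S n) + ereal c)"
    by (intro Limsup_mono always_eventually allI n)
  also have "\<dots> \<le> limsup (\<lambda>n. aseq G S n + aseq H S n) + limsup (\<lambda>n. ereal c)"
    by (rule ereal_limsup_add_mono)
  also have "\<dots> \<le> limsup (aseq G S) + limsup (aseq H S) + ereal c"
    by (intro add_mono ereal_limsup_add_mono) (simp_all add: Limsup_const)
  finally show ?thesis .
qed

lemma aseq_mono:
  assumes "\<And>gs. set gs \<subseteq> S \<Longrightarrow> \<exists>gs'. set gs' \<subseteq> S' \<and> length gs' = length gs \<and> F gs \<le> F' gs'"
  shows "limsup (aseq F S) \<le> limsup (aseq F' S')"
proof (intro Limsup_mono always_eventually allI)
  fix n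
  have "Sup (insert 0 ((\<lambda>gs. ereal (F gs)) ` {gs. set gs \<subseteq> S \<and> length gs = n})) \<le>
        Sup (insert 0 ((\<lambda>gs. ereal (F' gs)) ` {gs. set gs \<subseteq> S' \<and> length gs = n}))"
  proof (rule Sup_least)
    fix y assume "y \<in> insert 0 ((\<lambda>gs. ereal (F gs)) ` {gs. set gs \<subseteq> S \<and> length gs = n})"
    then consider "y = 0" | gs where "set gs \<subseteq> S" "length gs = n" "y = ereal (F gs)" by blast
    thus "y \<le> Sup (insert 0 ((\<lambda>gs. ereal (F' gs)) ` {gs. set gs \<subseteq> S' \<and> length gs = n}))"
    proof cases
      case 1 thus ?thesis by (simp add: Sup_ins0_nonneg)
    next
      case 2
      then obtain gs' where gs': "set gs' \<subseteq> S'" "length gs' = n" "F gs \<le> F' gs'" using assms by metis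
      have "y \<le> ereal (F' gs')" using 2 gs' by simp
      also have "\<dots> \<le> Sup (insert 0 ((\<lambda>gs. ereal (F' gs)) ` {gs. set gs \<subseteq> S' \<and> length gs = n}))"
        using gs' by (intro Sup_upper) auto
      finally show ?thesis .
    qed
  qed
  thus "aseq F S n \<le> aseq F' S' n" unfolding aseq_def by (rule ereal_mult_left_mono) simp
qed

lemma xlnx_tendsto:
  fixes p :: "nat \<Rightarrow> real"
  assumes p: "p \<longlonglongrightarrow> 0" "\<And>n. 0 \<le> p n"
  shows "(\<lambda>n. p n * ln (p n)) \<longlonglongrightarrow> 0"
proof -
  have L: "((\<lambda>t::real. t * ln t) \<longlongrightarrow> 0) (at_right 0)" by real_asymp
  have "continuous (at 0 within {0..}) (\<lambda>t::real. t * ln t)"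
    unfolding continuous_within at_within_Ici_at_right using L by simp
  from continuous_within_tendsto_compose'[OF this _ p(1)] p(2) show ?thesis by simp
qed

lemma bin_ent_tendsto:
  fixes p :: "nat \<Rightarrow> real"
  assumes p: "p \<longlonglongrightarrow> 0" "\<And>n. 0 \<le> p n"
  shows "(\<lambda>n. - (p n * ln (p n) + (1 - p n) * ln (1 - p n))) \<longlonglongrightarrow> 0"
proof -
  have "(\<lambda>n. (1 - p n) * ln (1 - p n)) \<longlonglongrightarrow> (1 - 0) * ln (1 - 0)"
    by (intro tendsto_intros p) simp
  hence "(\<lambda>n. (1 - p n) * ln (1 - p n)) \<longlonglongrightarrow> 0" by simp
  from tendsto_minus[OF tendsto_add[OF xlnx_tendsto[OF p] this]] show ?thesis by simp
qed

context ent_ctx begin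

lemma join_V:
  assumes "set gs \<subseteq> carrier G"
  shows "join_list M (map (\<lambda>g. pull_part M T g {A, space M - A}) gs) =
         (\<lambda>v. V T A gs -` {v} \<inter> space M) ` {v. length v = length gs}"
  using assms
proof (induction gs)
  case Nil
  have "{v :: bool list. length v = 0} = {[]}" by auto
  thus ?case by simp
next
  case (Cons g gs)
  have g: "g \<in> carrier G" using Cons.prems by simp
  define E where "E b = {x \<in> space M. (T g x \<in> A) = b}" for b
  define F where "F v = V T A gs -` {v} \<inter> space M" for v
  define F' where "F' w = V T A (g # gs) -` {w} \<inter> space M" for w
  have pull: "pull_part M T g {A, space M - A} = {E True, E False}"
    unfolding pull_part_def E_def using Tspace[OF g] by auto
  have key: "E b \<inter> F v = F' (b # v)" for b v
    unfolding E_def F_def F'_def by (auto simp: V_Cons)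
  have IH: "join_list M (map (\<lambda>g. pull_part M T g {A, space M - A}) gs) = F ` {v. length v = length gs}"
    unfolding F_def using Cons by simp
  have "join_part {E True, E False} (F ` {v. length v = length gs}) = F' ` {v. length v = length (g # gs)}"
  proof
    show "join_part {E True, E False} (F ` {v. length v = length gs}) \<subseteq> F' ` {v. length v = length (g # gs)}"
    proof
      fix X assume "X \<in> join_part {E True, E False} (F ` {v. length v = length gs})"
      then obtain b v where X: "X = E b \<inter> F v" and v: "length v = length gs"
        unfolding join_part_def by blast
      thus "X \<in> F' ` {v. length v = length (g # gs)}"
        unfolding X key by (intro imageI) simp
    qed
    show "F' ` {v. length v = length (g # gs)} \<subseteq> join_part {E True, E False} (F ` {v. length v = length gs})"
    proof
      fix X assume "X \<in> F' ` {v. length v = length (g # gs)}"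
      then obtain w where X: "X = F' w" and w: "length w = Suc (length gs)" by auto
      then obtain b v where wv: "w = b # v" by (cases w) auto
      with w have v: "length v = length gs" by simp
      have "X = E b \<inter> F v" unfolding X wv key ..
      moreover have "E b \<in> {E True, E False}" by (cases b) auto
      ultimately show "X \<in> join_part {E True, E False} (F ` {v. length v = length gs})"
        unfolding join_part_def using v by blast
    qed
  qed
  thus ?case unfolding F'_def by (simp add: IH pull)
qed

lemma PE_ent:
  assumes "set gs \<subseteq> carrier G"
  shows "part_entropy M (join_list M (map (\<lambda>g. pull_part M T g {A, space M - A}) gs)) = ent M (V T A gs)"
  unfolding join_V[OF assms]
  by (rule part_entropy_image[OF finite_bool_lists]) (auto intro: prob_space_axioms)

end



lemma ent_const: "prob_space M \<Longrightarrow> ent M (\<lambda>x. c) = 0"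
proof -
  assume P: "prob_space M"
  interpret prob_space M by fact
  have "(\<lambda>x. c) ` space M \<subseteq> {c}" by auto
  thus ?thesis using ent_superset[of "{c}" "\<lambda>x. c"] by (simp add: prob_space)
qed

lemma aseq_zero_fun: "aseq (\<lambda>_. 0) S = (\<lambda>n. 0)"
  by (rule ext) (rule aseq_zero)

locale ent_ctxS = ent_ctx M G T for M :: "'a measure" and G :: "('g, 'b) monoid_scheme" and T +
  fixes S :: "'g set"
  assumes S: "S \<subseteq> carrier G"
begin

definition UE :: "'a set \<Rightarrow> ereal" where
  "UE A = limsup (aseq (\<lambda>gs. ent M (V T A gs)) S)"

lemma UE_eq:
  assumes A: "A \<in> sets M"
  shows "upper_entropy M T S {A, space M - A} = UE A"
proof -
  have "upper_entropy M T S {A, space M - A} =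
    limsup (aseq (\<lambda>gs. part_entropy M (join_list M (map (\<lambda>g. pull_part M T g {A, space M - A}) gs))) S)"
    unfolding upper_entropy_def aseq_def ..
  also have "aseq (\<lambda>gs. part_entropy M (join_list M (map (\<lambda>g. pull_part M T g {A, space M - A}) gs))) S =
             aseq (\<lambda>gs. ent M (V T A gs)) S"
    by (rule aseq_cong) (use S in \<open>auto intro!: PE_ent\<close>)
  finally show ?thesis unfolding UE_def .
qed

lemma UE_nonneg: "0 \<le> UE A" unfolding UE_def by (rule aseq_limsup_nonneg)

definition Cset where "Cset = {A \<in> sets M. upper_entropy M T S {A, space M - A} = 0}"

lemma Cset_iff: "A \<in> Cset \<longleftrightarrow> A \<in> sets M \<and> UE A \<le> 0"
  unfolding Cset_def using UE_eq UE_nonneg by (auto intro: antisym)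

lemma gsS: "set gs \<subseteq> S \<Longrightarrow> set gs \<subseteq> carrier G" using S by auto

lemma C_empty: "{} \<in> Cset"
proof -
  have "UE {} \<le> limsup (aseq (\<lambda>_. 0) S) + limsup (aseq (\<lambda>_. 0) S) + ereal 0"
    unfolding UE_def
  proof (rule aseq_le)
    fix gs :: "'g list"
    have "V T {} gs = (\<lambda>x. replicate (length gs) False)" by (simp add: V_def fun_eq_iff map_replicate_const)
    thus "ent M (V T {} gs) \<le> 0 + 0 + 0 * real (length gs)" using ent_const[OF prob_space_axioms, of "replicate (length gs) False"] by simp
  qed simp_all
  thus ?thesis unfolding Cset_iff by (simp add: aseq_zero_fun Limsup_const)
qed

lemma C_compl: "A \<in> Cset \<Longrightarrow> space M - A \<in> Cset"
proof -
  assume A: "A \<in> Cset"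
  hence As: "A \<in> sets M" by (simp add: Cset_def)
  hence "space M - (space M - A) = A" using sets.sets_into_space by blast
  hence "{space M - A, space M - (space M - A)} = {A, space M - A}" by auto
  thus ?thesis using A As unfolding Cset_def by auto
qed

lemma C_union: "A \<in> Cset \<Longrightarrow> B \<in> Cset \<Longrightarrow> A \<union> B \<in> Cset"
proof -
  assume A: "A \<in> Cset" and B: "B \<in> Cset"
  have As: "A \<in> sets M" and Bs: "B \<in> sets M" using A B by (auto simp: Cset_def)
  have "UE (A \<union> B) \<le> UE A + UE B + ereal 0"
    unfolding UE_def
    by (rule aseq_le) (use ent_V_union[OF gsS As Bs] ent_nonneg in auto)
  also have "\<dots> \<le> 0" using A B unfolding Cset_iff by (simp add: add_nonpos_nonpos)
  finally show ?thesis using As Bs by (simp add: Cset_iff)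
qed

lemma C_UN:
  fixes A :: "nat \<Rightarrow> 'a set"
  assumes A: "range A \<subseteq> Cset"
  shows "(\<Union>i. A i) \<in> Cset"
proof -
  define B where "B N = (\<Union>i<N. A i)" for N
  have BC: "B N \<in> Cset" for N
  proof (induction N)
    case 0 thus ?case by (simp add: B_def C_empty)
  next
    case (Suc N)
    have "B (Suc N) = B N \<union> A N" by (auto simp: B_def lessThan_Suc)
    moreover have "A N \<in> Cset" using A by blast
    ultimately show ?case using C_union[OF Suc] by simp
  qed
  have As: "A i \<in> sets M" for i using A by (auto simp: Cset_def)
  have Bs: "B N \<in> sets M" for N using BC[of N] by (simp add: Cset_def)
  define U where "U = (\<Union>i. A i)"
  have Us: "U \<in> sets M" unfolding U_def using As by auto
  define D where "D N = U - B N" for N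
  have Ds: "D N \<in> sets M" for N unfolding D_def using Us Bs by auto
  have UBD: "U = B N \<union> D N" for N unfolding D_def U_def B_def by auto
  define e where "e N = ent M (\<lambda>x. x \<in> D N)" for N
  have bound: "UE U \<le> ereal (e N)" for N
  proof -
    have "UE U \<le> UE (B N) + limsup (aseq (\<lambda>_. 0) S) + ereal (e N)"
      unfolding UE_def
    proof (rule aseq_le)
      fix gs :: "'g list" assume gs: "set gs \<subseteq> S"
      have "ent M (V T U gs) \<le> ent M (V T (B N) gs) + ent M (V T (D N) gs)"
        unfolding UBD[of N] by (rule ent_V_union[OF gsS[OF gs] Bs Ds])
      also have "ent M (V T (D N) gs) \<le> real (length gs) * e N"
        unfolding e_def by (rule ent_V_bound[OF gsS[OF gs] Ds])
      finally show "ent M (V T U gs) \<le> ent M (V T (B N) gs) + 0 + e N * real (length gs)"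
        by (simp add: mult.commute)
    qed (simp_all add: ent_nonneg e_def)
    also have "\<dots> \<le> 0 + ereal (e N)"
    proof -
      have "UE (B N) \<le> 0" using BC[of N] by (simp add: Cset_iff)
      hence "UE (B N) + ereal (e N) \<le> 0 + ereal (e N)" by (rule add_right_mono)
      thus ?thesis by (simp add: aseq_zero_fun Limsup_const)
    qed
    finally show ?thesis by simp
  qed
  have pB: "(\<lambda>N. measure M (B N)) \<longlonglongrightarrow> measure M U"
  proof -
    have "(\<lambda>N. measure M (B N)) \<longlonglongrightarrow> measure M (\<Union>N. B N)"
    proof (rule finite_Lim_measure_incseq)
      show "range B \<subseteq> sets M" using Bs by auto
      show "incseq B" unfolding incseq_def B_def
      proof (intro allI impI subsetI)
        fix m n x assume "m \<le> n" "x \<in> (\<Union>i<m. A i)"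
        thus "x \<in> (\<Union>i<n. A i)" by auto
      qed
    qed
    moreover have "(\<Union>N. B N) = U" unfolding B_def U_def by auto
    ultimately show ?thesis by simp
  qed
  have pD: "measure M (D N) = measure M U - measure M (B N)" for N
  proof -
    have "B N \<subseteq> U" unfolding B_def U_def by auto
    thus ?thesis unfolding D_def by (rule finite_measure_Diff[OF Us Bs])
  qed
  have pD0: "(\<lambda>N. measure M (D N)) \<longlonglongrightarrow> 0"
    unfolding pD using tendsto_diff[OF tendsto_const pB, of "measure M U"] by simp
  have eN: "e N = - (measure M (D N) * ln (measure M (D N)) + (1 - measure M (D N)) * ln (1 - measure M (D N)))" for N
  proof -
    have T: "(\<lambda>x. x \<in> D N) -` {True} \<inter> space M = D N" using sets.sets_into_space[OF Ds] by auto
    have F: "(\<lambda>x. x \<in> D N) -` {False} \<inter> space M = space M - D N" by auto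
    have "e N = - (\<Sum>b\<in>UNIV. measure M ((\<lambda>x. x \<in> D N) -` {b} \<inter> space M) * ln (measure M ((\<lambda>x. x \<in> D N) -` {b} \<inter> space M)))"
      unfolding e_def by (rule ent_superset) auto
    also have "\<dots> = - (measure M (D N) * ln (measure M (D N)) + (1 - measure M (D N)) * ln (1 - measure M (D N)))"
      by (simp add: UNIV_bool T F prob_compl Ds)
    finally show ?thesis .
  qed
  have e0: "e \<longlonglongrightarrow> 0" unfolding eN by (rule bin_ent_tendsto[OF pD0 measure_nonneg])
  have "UE U \<le> 0"
  proof (rule ereal_le_epsilon2)
    fix eps :: real assume eps: "0 < eps"
    obtain N where "norm (e N - 0) < eps" using LIMSEQ_D[OF e0 eps] by blast
    hence "e N \<le> eps" by simp
    hence "UE U \<le> ereal eps" using bound[of N] by (meson ereal_less_eq(3) order_trans)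
    thus "UE U \<le> 0 + ereal eps" by simp
  qed
  thus ?thesis using Us unfolding U_def Cset_iff by simp
qed

lemma Cset_sigma: "sigma_algebra (space M) Cset"
  unfolding sigma_algebra_iff2
proof (intro conjI ballI allI impI)
  show "Cset \<subseteq> Pow (space M)" using sets.sets_into_space by (auto simp: Cset_def)
  show "{} \<in> Cset" by (rule C_empty)
  show "space M - s \<in> Cset" if "s \<in> Cset" for s using that by (rule C_compl)
  show "\<Union> (range A) \<in> Cset" if "range A \<subseteq> Cset" for A :: "nat \<Rightarrow> 'a set" using C_UN[OF that] by simp
qed

lemma C_invariant:
  assumes SG: "S = carrier G" and g: "g \<in> carrier G" and A: "A \<in> Cset"
  shows "T g -` A \<inter> space M \<in> Cset"
proof -
  have As: "A \<in> sets M" using A by (simp add: Cset_def)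
  have A's: "T g -` A \<inter> space M \<in> sets M" using Tm[OF g] As by (rule measurable_sets)
  have "UE (T g -` A \<inter> space M) \<le> UE A"
    unfolding UE_def
  proof (rule aseq_mono)
    fix gs assume gs: "set gs \<subseteq> S"
    let ?gs' = "map (\<lambda>h. g \<otimes>\<^bsub>G\<^esub> h) gs"
    have "set ?gs' \<subseteq> S" using gs g grp unfolding SG by (auto intro: group.is_monoid monoid.m_closed)
    moreover have "ent M (V T (T g -` A \<inter> space M) gs) = ent M (V T A ?gs')"
    proof (rule ent_cong)
      fix x assume x: "x \<in> space M"
      have "(T h x \<in> T g -` A \<inter> space M) = (T (g \<otimes>\<^bsub>G\<^esub> h) x \<in> A)" if "h \<in> set gs" for h
        using that gs Tspace[of h x] x Tmul[OF g _ x, of h] unfolding SG by auto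
      thus "V T (T g -` A \<inter> space M) gs x = V T A ?gs' x" by (simp add: V_def)
    qed
    ultimately show "\<exists>gs'. set gs' \<subseteq> S \<and> length gs' = length gs \<and>
        ent M (V T (T g -` A \<inter> space M) gs) \<le> ent M (V T A gs')"
      by (intro exI[of _ ?gs']) simp
  qed
  also have "\<dots> \<le> 0" using A by (simp add: Cset_iff)
  finally show ?thesis using A's by (simp add: Cset_iff)
qed

end

theorem proposition4p5:
  fixes M :: "'a measure" and G :: "('g, 'b) monoid_scheme" and T :: "'g \<Rightarrow> 'a \<Rightarrow> 'a"
    and S :: "'g set"
  assumes sys: "mps M G T"
    and S: "S \<subseteq> carrier G"
  shows
    \<comment> \<open>(1) closed linear subspace of L^2\<close>
    "({f. almost_periodic M T S f} \<subseteq> L2 M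
      \<and> almost_periodic M T S (\<lambda>x. 0)
      \<and> (\<forall>f h. almost_periodic M T S f \<and> almost_periodic M T S h
              \<longrightarrow> almost_periodic M T S (\<lambda>x. f x + h x))
      \<and> (\<forall>c f. almost_periodic M T S f \<longrightarrow> almost_periodic M T S (\<lambda>x. c * f x))
      \<and> (\<forall>u f. (\<forall>n. almost_periodic M T S (u n)) \<and> f \<in> L2 M
              \<and> (\<lambda>n. L2_norm M (\<lambda>x. u n x - f x)) \<longlonglongrightarrow> 0
              \<longrightarrow> almost_periodic M T S f))
     \<and>
    \<comment> \<open>(2) zero-entropy sets form a sub-sigma-algebra, G-invariant when S = G\<close>
     (let C = {A \<in> sets M. upper_entropy M T S {A, space M - A} = 0} in
        C \<subseteq> sets M \<and> sigma_algebra (space M) C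
        \<and> (S = carrier G \<longrightarrow> (\<forall>g\<in>carrier G. \<forall>A\<in>C. T g -` A \<inter> space M \<in> C)))"
proof -
  interpret E: ent_ctx M G T by (rule ent_ctx.intro[OF sys])
  interpret P: mp_ctx M T S
    by (rule mp_ctx.intro) (use S E.Tm E.Td in auto)
  interpret ES: ent_ctxS M G T S
    by (rule ent_ctxS.intro[OF E.ent_ctx_axioms]) (rule ent_ctxS_axioms.intro[OF S])
  have p1: "{f. almost_periodic M T S f} \<subseteq> L2 M
      \<and> almost_periodic M T S (\<lambda>x. 0)
      \<and> (\<forall>f h. almost_periodic M T S f \<and> almost_periodic M T S h
              \<longrightarrow> almost_periodic M T S (\<lambda>x. f x + h x))
      \<and> (\<forall>c f. almost_periodic M T S f \<longrightarrow> almost_periodic M T S (\<lambda>x. c * f x))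
      \<and> (\<forall>u f. (\<forall>n. almost_periodic M T S (u n)) \<and> f \<in> L2 M
              \<and> (\<lambda>n. L2_norm M (\<lambda>x. u n x - f x)) \<longlonglongrightarrow> 0
              \<longrightarrow> almost_periodic M T S f)"
  proof (intro conjI allI impI subsetI)
    show "f \<in> L2 M" if "f \<in> {f. almost_periodic M T S f}" for f using that P.AP_L2 by simp
    show "almost_periodic M T S (\<lambda>x. 0)" by (rule P.AP_zero)
    show "almost_periodic M T S (\<lambda>x. f x + h x)" if "almost_periodic M T S f \<and> almost_periodic M T S h" for f h
      using that P.AP_add by blast
    show "almost_periodic M T S (\<lambda>x. c * f x)" if "almost_periodic M T S f" for c f
      using that by (rule P.AP_scale)
    show "almost_periodic M T S f" if "(\<forall>n. almost_periodic M T S (u n)) \<and> f \<in> L2 M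
              \<and> (\<lambda>n. L2_norm M (\<lambda>x. u n x - f x)) \<longlonglongrightarrow> 0" for u f
      using that P.AP_closed by blast
  qed
  have p2: "ES.Cset \<subseteq> sets M \<and> sigma_algebra (space M) ES.Cset
        \<and> (S = carrier G \<longrightarrow> (\<forall>g\<in>carrier G. \<forall>A\<in>ES.Cset. T g -` A \<inter> space M \<in> ES.Cset))"
    using ES.Cset_sigma ES.C_invariant by (auto simp: ES.Cset_def)
  show ?thesis using p1 p2 unfolding Let_def ES.Cset_def by blast
qed

end
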